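(* Let $d_1,d_2,d_3\ge2$ and let $|\varphi\rangle=\sum_{i=1}^{d_1}\sum_{j=1}^{d_2}\sum_{k=1}^{d_3}a_{ijk}|ijk\rangle$ be a normalized pure state in $H_1\otimes H_2\otimes H_3$. Then $$C_3^2(|\varphi\rangle)\ \ge\ \frac{1}{(d_1-1)(d_2-1)(d_3-1)}\sum C_3^2(|\varphi\rangle_{2\otimes2\otimes2}),$$ where the sum runs over all pure substates $|\varphi\rangle_{2\otimes2\otimes2}=\sum_{i\in\{i_1,i_2\}}\sum_{j\in\{j_1,j_2\}}\sum_{k\in\{k_1,k_2\}}a_{ijk}|ijk\rangle$ with $i_1\ne i_2$ in $\{1,\dots,d_1\}$, $j_1\ne j_2$ in $\{1,\dots,d_2\}$, $k_1\ne k_2$ in $\{1,\dots,d_3\}$ (unordered pairs).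
   Context: For a (not necessarily normalized) vector $|\varphi\rangle\in H_1\otimes\cdots\otimes H_N$ with $\sigma=|\varphi\rangle\langle\varphi|$, the $N$-partite concurrence is $C_N(|\varphi\rangle)=2^{1-N/2}\sqrt{(2^N-2)(\mathrm{tr}\,\sigma)^2-\sum_\alpha \mathrm{tr}(\sigma_\alpha^2)}$, where $\alpha$ runs over all $2^N-2$ nonempty proper subsets of $\{1,\dots,N\}$ and $\sigma_\alpha=\mathrm{tr}_{\bar\alpha}\sigma$. Here $N=3$ and the substates are unnormalized vectors in $\mathbb{C}^2\otimes\mathbb{C}^2\otimes\mathbb{C}^2$. *)

theory Defs
  imports Complex_Main
begin

text \<open>A (not necessarily normalized) tripartite vector is given by its coefficients
  a :: nat \<times> nat \<times> nat \<Rightarrow> complex on a finite product index set I = I1 \<times> I2 \<times> I3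
  (the computational basis |ijk> with (i,j,k) in I). Parties are numbered 0,1,2.\<close>

definition mix3 :: "nat set \<Rightarrow> nat \<times> nat \<times> nat \<Rightarrow> nat \<times> nat \<times> nat \<Rightarrow> nat \<times> nat \<times> nat" where
  "mix3 \<alpha> u v = ((if 0 \<in> \<alpha> then fst u else fst v),
                  (if 1 \<in> \<alpha> then fst (snd u) else fst (snd v)),
                  (if 2 \<in> \<alpha> then snd (snd u) else snd (snd v)))"

definition tr_sigma :: "(nat \<times> nat \<times> nat) set \<Rightarrow> (nat \<times> nat \<times> nat \<Rightarrow> complex) \<Rightarrow> real" where
  "tr_sigma I a = (\<Sum>x\<in>I. (cmod (a x))^2)"

text \<open>tr(sigma_alpha^2), sigma_alpha = partial trace over the complement of alpha:
  (sigma_alpha)[x_alpha, y_alpha] = sum over z of a(x_alpha,z) * conj(a(y_alpha,z)).\<close>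
definition tr_red_sq :: "(nat \<times> nat \<times> nat) set \<Rightarrow> (nat \<times> nat \<times> nat \<Rightarrow> complex) \<Rightarrow> nat set \<Rightarrow> real" where
  "tr_red_sq I a \<alpha> = Re (\<Sum>x\<in>I. \<Sum>y\<in>I.
      a x * cnj (a (mix3 \<alpha> y x)) * a y * cnj (a (mix3 \<alpha> x y)))"

definition proper_parts3 :: "nat set set" where
  "proper_parts3 = Pow {0,1,2} - {{}, {0,1,2}}"

text \<open>N-partite concurrence with N = 3:
  C_3 = 2^(1 - 3/2) * sqrt((2^3 - 2) (tr sigma)^2 - sum_alpha tr(sigma_alpha^2)).\<close>
definition C3 :: "(nat \<times> nat \<times> nat) set \<Rightarrow> (nat \<times> nat \<times> nat \<Rightarrow> complex) \<Rightarrow> real" where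
  "C3 I a = 2 powr (1 - 3/2) *
     sqrt ((2^3 - 2) * (tr_sigma I a)^2 - (\<Sum>\<alpha>\<in>proper_parts3. tr_red_sq I a \<alpha>))"

end

theory Submission
  imports Defs
begin

lemma cmod_diff_sq: "(cmod (p - q))^2 = (cmod p)^2 + (cmod q)^2 - 2 * Re (p * cnj q)"
  unfolding cmod_power2 by (simp add: power2_diff algebra_simps)

lemma mix_inv1: "mix3 \<alpha> (mix3 \<alpha> x y) (mix3 \<alpha> y x) = x"
  by (cases x; cases y) (auto simp: mix3_def)
lemma mix_inv2: "mix3 \<alpha> (mix3 \<alpha> y x) (mix3 \<alpha> x y) = y"
  by (cases x; cases y) (auto simp: mix3_def)

lemma mix_mem: "x \<in> A \<times> B \<times> C \<Longrightarrow> y \<in> A \<times> B \<times> C \<Longrightarrow> mix3 \<alpha> x y \<in> A \<times> B \<times> C"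
  by (cases x; cases y) (auto simp: mix3_def)

definition D :: "(nat \<times> nat \<times> nat \<Rightarrow> complex) \<Rightarrow> nat set \<Rightarrow> nat \<times> nat \<times> nat \<Rightarrow> nat \<times> nat \<times> nat \<Rightarrow> real" where
  "D a \<alpha> x y = (cmod (a x * a y - a (mix3 \<alpha> y x) * a (mix3 \<alpha> x y)))^2"

lemma key:
  assumes I: "I = A \<times> B \<times> C" and fin: "finite A" "finite B" "finite C"
  shows "(\<Sum>x\<in>I. \<Sum>y\<in>I. D a \<alpha> x y) = 2 * (tr_sigma I a)^2 - 2 * tr_red_sq I a \<alpha>"
proof -
  let ?m = "mix3 \<alpha>"
  have finI: "finite I" using I fin by simp
  have sq: "(tr_sigma I a)^2 = (\<Sum>x\<in>I. \<Sum>y\<in>I. (cmod (a x * a y))^2)"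
    unfolding tr_sigma_def power2_eq_square[of "sum _ _"] sum_product
    by (simp add: norm_mult power_mult_distrib)
  have "(\<Sum>x\<in>I. \<Sum>y\<in>I. (cmod (a (?m y x) * a (?m x y)))^2)
      = (\<Sum>(x,y)\<in>I\<times>I. (cmod (a (?m y x) * a (?m x y)))^2)"
    by (simp add: sum.cartesian_product)
  also have "\<dots> = (\<Sum>(x,y)\<in>I\<times>I. (cmod (a x * a y))^2)"
    apply (rule sum.reindex_bij_witness[where i = "\<lambda>(x,y). (?m y x, ?m x y)" and j = "\<lambda>(x,y). (?m y x, ?m x y)"])
    using mix_mem I by (auto simp: mix_inv1 mix_inv2 mult.commute)
  also have "\<dots> = (tr_sigma I a)^2" unfolding sq by (simp add: sum.cartesian_product)
  finally have sq2: "(\<Sum>x\<in>I. \<Sum>y\<in>I. (cmod (a (?m y x) * a (?m x y)))^2) = (tr_sigma I a)^2" .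
  have red: "tr_red_sq I a \<alpha> = (\<Sum>x\<in>I. \<Sum>y\<in>I. Re ((a x * a y) * cnj (a (?m y x) * a (?m x y))))"
    unfolding tr_red_sq_def Re_sum by (simp add: mult_ac)
  have "(\<Sum>x\<in>I. \<Sum>y\<in>I. D a \<alpha> x y) = (\<Sum>x\<in>I. \<Sum>y\<in>I. (cmod (a x * a y))^2)
    + (\<Sum>x\<in>I. \<Sum>y\<in>I. (cmod (a (?m y x) * a (?m x y)))^2)
    - 2 * (\<Sum>x\<in>I. \<Sum>y\<in>I. Re ((a x * a y) * cnj (a (?m y x) * a (?m x y))))"
    unfolding D_def cmod_diff_sq sum_subtractf sum.distrib sum_distrib_left by simp
  then show ?thesis using sq sq2 red by simp
qed

lemma card_pp: "card proper_parts3 = 6"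
proof -
  have "card {0,1,2::nat} = 3" by simp
  hence "card (Pow {0,1,2::nat}) = 8" by (simp add: card_Pow)
  moreover have "card {{}, {0,1,2::nat}} = 2" by simp
  moreover have "{{}, {0,1,2::nat}} \<subseteq> Pow {0,1,2}" by auto
  ultimately show ?thesis unfolding proper_parts3_def
    by (simp add: card_Diff_subset)
qed

lemma D_nonneg: "D a \<alpha> x y \<ge> 0" by (simp add: D_def)

lemma C3_sq:
  assumes I: "I = A \<times> B \<times> C" and fin: "finite A" "finite B" "finite C"
  shows "(C3 I a)^2 = (\<Sum>\<alpha>\<in>proper_parts3. \<Sum>x\<in>I. \<Sum>y\<in>I. D a \<alpha> x y) / 4"
proof -
  define E where "E = (2^3 - 2) * (tr_sigma I a)^2 - (\<Sum>\<alpha>\<in>proper_parts3. tr_red_sq I a \<alpha>)"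
  have "(\<Sum>\<alpha>\<in>proper_parts3. \<Sum>x\<in>I. \<Sum>y\<in>I. D a \<alpha> x y)
      = (\<Sum>\<alpha>\<in>proper_parts3. 2 * (tr_sigma I a)^2 - 2 * tr_red_sq I a \<alpha>)"
    using key[OF I fin] by simp
  also have "\<dots> = 2 * E" unfolding E_def sum_subtractf by (simp add: card_pp sum_distrib_left)
  finally have S: "(\<Sum>\<alpha>\<in>proper_parts3. \<Sum>x\<in>I. \<Sum>y\<in>I. D a \<alpha> x y) = 2 * E" .
  have "0 \<le> (\<Sum>\<alpha>\<in>proper_parts3. \<Sum>x\<in>I. \<Sum>y\<in>I. D a \<alpha> x y)"
    by (intro sum_nonneg D_nonneg)
  hence E0: "E \<ge> 0" using S by simp
  have p: "(2 powr (1 - 3/2::real))^2 = 1/2"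
    by (simp add: powr_minus powr_half_sqrt divide_simps)
  have "(C3 I a)^2 = (2 powr (1 - 3/2::real))^2 * (sqrt E)^2"
    unfolding C3_def E_def by (simp add: power_mult_distrib)
  also have "\<dots> = E / 2" using p E0 by simp
  finally show ?thesis using S by simp
qed

definition e :: "nat set \<Rightarrow> nat \<Rightarrow> nat \<Rightarrow> real" where
  "e P u v = (if u \<in> P \<and> v \<in> P then 1 else 0)"

lemma count2:
  assumes "u < d"
  shows "(\<Sum>P\<in>{P. P \<subseteq> {..<d} \<and> card P = 2}. e P u v) \<le> real (d - 1)"
proof -
  let ?S = "{P. P \<subseteq> {..<d} \<and> card P = 2}"
  have finS: "finite ?S" by (rule finite_subset[of _ "Pow {..<d}"]) auto
  have "(\<Sum>P\<in>?S. e P u v) = real (card {P\<in>?S. u \<in> P \<and> v \<in> P})"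
    unfolding e_def using finS by (simp add: sum.If_cases Int_def conj_commute)
  also have "card {P\<in>?S. u \<in> P \<and> v \<in> P} \<le> card ((\<lambda>z. {u,z}) ` ({..<d} - {u}))"
  proof (rule card_mono)
    show "finite ((\<lambda>z. {u,z}) ` ({..<d} - {u}))" by simp
    show "{P\<in>?S. u \<in> P \<and> v \<in> P} \<subseteq> (\<lambda>z. {u,z}) ` ({..<d} - {u})"
    proof
      fix P assume P: "P \<in> {P\<in>?S. u \<in> P \<and> v \<in> P}"
      then obtain x y where xy: "P = {x,y}" "x \<noteq> y" by (auto simp: card_2_iff)
      show "P \<in> (\<lambda>z. {u,z}) ` ({..<d} - {u})"
      proof (cases "x = u")
        case True thus ?thesis using xy P by (auto intro!: image_eqI[where x = y])
      next
        case False hence "y = u" using xy P by auto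
        thus ?thesis using xy P False by (auto intro!: image_eqI[where x = x])
      qed
    qed
  qed
  also have "\<dots> \<le> card ({..<d} - {u})" by (rule card_image_le) simp
  also have "\<dots> = d - 1" using assms by simp
  finally show ?thesis by simp
qed


lemma prod3: "(\<Sum>P\<in>A. \<Sum>Q\<in>B. \<Sum>R\<in>C. f P * g Q * h R) = (\<Sum>P\<in>A. f P) * (\<Sum>Q\<in>B. g Q) * (\<Sum>R\<in>C. (h R::real))"
  by (simp add: sum_distrib_left[symmetric] sum_distrib_right[symmetric])

lemma swap6: "(\<Sum>p\<in>A. \<Sum>q\<in>B. \<Sum>r\<in>C. \<Sum>u\<in>DS. \<Sum>x\<in>E. \<Sum>y\<in>F. f p q r u x y)
  = (\<Sum>u\<in>DS. \<Sum>x\<in>E. \<Sum>y\<in>F. \<Sum>p\<in>A. \<Sum>q\<in>B. \<Sum>r\<in>C. f p q r u x y)"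
  apply (simp only: sum.swap[of _ A])
  apply (simp only: sum.swap[of _ B])
  apply (simp only: sum.swap[of _ C])
  done

theorem mainTheorem2:
  fixes d1 d2 d3 :: nat and a :: "nat \<times> nat \<times> nat \<Rightarrow> complex"
  assumes "d1 \<ge> 2" and "d2 \<ge> 2" and "d3 \<ge> 2"
    and "tr_sigma ({..<d1} \<times> {..<d2} \<times> {..<d3}) a = 1"
  shows "(C3 ({..<d1} \<times> {..<d2} \<times> {..<d3}) a)^2 \<ge>
    1 / real ((d1 - 1) * (d2 - 1) * (d3 - 1)) *
    (\<Sum>P\<in>{P. P \<subseteq> {..<d1} \<and> card P = 2}. \<Sum>Q\<in>{Q. Q \<subseteq> {..<d2} \<and> card Q = 2}.
       \<Sum>R\<in>{R. R \<subseteq> {..<d3} \<and> card R = 2}. (C3 (P \<times> Q \<times> R) a)^2)"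
proof -
  define I0 where "I0 = {..<d1} \<times> {..<d2} \<times> {..<d3}"
  define PP where "PP = {P. P \<subseteq> {..<d1} \<and> card P = 2}"
  define QQ where "QQ = {Q. Q \<subseteq> {..<d2} \<and> card Q = 2}"
  define RR where "RR = {R. R \<subseteq> {..<d3} \<and> card R = 2}"
  define N where "N = real ((d1 - 1) * (d2 - 1) * (d3 - 1))"
  define w where "w P Q R x y = e P (fst x) (fst y) * e Q (fst (snd x)) (fst (snd y)) * e R (snd (snd x)) (snd (snd y))"
    for P Q R and x y :: "nat \<times> nat \<times> nat"
  have Npos: "N > 0" unfolding N_def using assms(1-3) by simp
  have finI0: "finite I0" unfolding I0_def by simp
  have r: "sum f J = (\<Sum>x\<in>I0. if x \<in> J then f x else 0)" if "J \<subseteq> I0" for J and f :: "nat \<times> nat \<times> nat \<Rightarrow> real"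
    using sum.inter_restrict[OF finI0, of f J] that by (simp add: Int_absorb1)
  have restr: "(\<Sum>x\<in>P\<times>Q\<times>R. \<Sum>y\<in>P\<times>Q\<times>R. D a \<alpha> x y) = (\<Sum>x\<in>I0. \<Sum>y\<in>I0. w P Q R x y * D a \<alpha> x y)"
    if "P \<in> PP" "Q \<in> QQ" "R \<in> RR" for P Q R \<alpha>
  proof -
    have sub: "P \<times> Q \<times> R \<subseteq> I0" using that unfolding I0_def PP_def QQ_def RR_def by auto
    have "(\<Sum>x\<in>P\<times>Q\<times>R. \<Sum>y\<in>P\<times>Q\<times>R. D a \<alpha> x y)
      = (\<Sum>x\<in>I0. if x \<in> P\<times>Q\<times>R then (\<Sum>y\<in>I0. if y \<in> P\<times>Q\<times>R then D a \<alpha> x y else 0) else 0)"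
      by (simp add: r[OF sub])
    also have "\<dots> = (\<Sum>x\<in>I0. \<Sum>y\<in>I0. w P Q R x y * D a \<alpha> x y)"
    proof (rule sum.cong[OF refl])
      fix x assume "x \<in> I0"
      have wJ: "w P Q R x y = (if x \<in> P\<times>Q\<times>R \<and> y \<in> P\<times>Q\<times>R then 1 else 0)" for y
        by (cases x; cases y) (auto simp: w_def e_def)
      have wJ2: "w P Q R x y * D a \<alpha> x y = (if x \<in> P\<times>Q\<times>R \<and> y \<in> P\<times>Q\<times>R then D a \<alpha> x y else 0)" for y
        by (simp add: wJ)
      show "(if x \<in> P\<times>Q\<times>R then (\<Sum>y\<in>I0. if y \<in> P\<times>Q\<times>R then D a \<alpha> x y else 0) else 0)
          = (\<Sum>y\<in>I0. w P Q R x y * D a \<alpha> x y)"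
        by (cases "x \<in> P\<times>Q\<times>R") (simp_all add: wJ2)
    qed
    finally show ?thesis .
  qed
  have C3sub: "(C3 (P \<times> Q \<times> R) a)^2 = (\<Sum>\<alpha>\<in>proper_parts3. \<Sum>x\<in>I0. \<Sum>y\<in>I0. w P Q R x y * D a \<alpha> x y) / 4"
    if "P \<in> PP" "Q \<in> QQ" "R \<in> RR" for P Q R
  proof -
    have "finite P" "finite Q" "finite R" using that unfolding PP_def QQ_def RR_def
      by (auto intro: finite_subset)
    thus ?thesis using C3_sq[OF refl] restr[OF that] by simp
  qed
  have "(\<Sum>P\<in>PP. \<Sum>Q\<in>QQ. \<Sum>R\<in>RR. (C3 (P \<times> Q \<times> R) a)^2)
     = (\<Sum>P\<in>PP. \<Sum>Q\<in>QQ. \<Sum>R\<in>RR. \<Sum>\<alpha>\<in>proper_parts3. \<Sum>x\<in>I0. \<Sum>y\<in>I0. w P Q R x y * D a \<alpha> x y) / 4"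
  proof -
    have "(\<Sum>P\<in>PP. \<Sum>Q\<in>QQ. \<Sum>R\<in>RR. (C3 (P \<times> Q \<times> R) a)^2)
      = (\<Sum>P\<in>PP. \<Sum>Q\<in>QQ. \<Sum>R\<in>RR. (\<Sum>\<alpha>\<in>proper_parts3. \<Sum>x\<in>I0. \<Sum>y\<in>I0. w P Q R x y * D a \<alpha> x y) / 4)"
      by (intro sum.cong refl C3sub)
    then show ?thesis by (simp only: sum_divide_distrib)
  qed
  also have "\<dots> = (\<Sum>\<alpha>\<in>proper_parts3. \<Sum>x\<in>I0. \<Sum>y\<in>I0. (\<Sum>P\<in>PP. \<Sum>Q\<in>QQ. \<Sum>R\<in>RR. w P Q R x y) * D a \<alpha> x y) / 4"
    unfolding sum_distrib_right by (subst swap6) (rule refl)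
  also have "\<dots> \<le> (\<Sum>\<alpha>\<in>proper_parts3. \<Sum>x\<in>I0. \<Sum>y\<in>I0. N * D a \<alpha> x y) / 4"
  proof (intro divide_right_mono sum_mono mult_right_mono D_nonneg)
    fix x y assume x: "x \<in> I0"
    have "(\<Sum>P\<in>PP. \<Sum>Q\<in>QQ. \<Sum>R\<in>RR. w P Q R x y)
       = (\<Sum>P\<in>PP. e P (fst x) (fst y)) * (\<Sum>Q\<in>QQ. e Q (fst (snd x)) (fst (snd y))) * (\<Sum>R\<in>RR. e R (snd (snd x)) (snd (snd y)))"
      unfolding w_def by (rule prod3)
    also have "\<dots> \<le> real (d1 - 1) * real (d2 - 1) * real (d3 - 1)"
      using x unfolding PP_def QQ_def RR_def I0_def
      by (intro mult_mono count2 sum_nonneg) (auto simp: e_def)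
    also have "\<dots> = N" unfolding N_def by simp
    finally show "(\<Sum>P\<in>PP. \<Sum>Q\<in>QQ. \<Sum>R\<in>RR. w P Q R x y) \<le> N" .
  qed simp
  also have "\<dots> = N * (C3 I0 a)^2"
    unfolding I0_def by (simp add: C3_sq[OF refl] sum_distrib_left)
  finally have main: "(\<Sum>P\<in>PP. \<Sum>Q\<in>QQ. \<Sum>R\<in>RR. (C3 (P \<times> Q \<times> R) a)^2) \<le> N * (C3 I0 a)^2" .
  have "1 / N * (\<Sum>P\<in>PP. \<Sum>Q\<in>QQ. \<Sum>R\<in>RR. (C3 (P \<times> Q \<times> R) a)^2) \<le> (C3 I0 a)^2"
    using main Npos by (simp add: field_simps)
  thus ?thesis unfolding I0_def PP_def QQ_def RR_def N_def .
qed

end
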